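(* Let $E$ be a finite set and let $f:\{0,1\}^E\to[0,1]$ be an increasing function. For any monotonic measure $\mu$ on $\{0,1\}^E$ and any decision tree $T$, $$\mathrm{Var}_\mu(f)\;\le\;\sum_{e\in E}\delta_e(f,T)\,\mathrm{Cov}_\mu(f,\omega_e),$$ where $\delta_e(f,T):=\mu\big[\exists\, t\le\tau(\omega):\ e_t=e\big]$ is the revealment of $f$ for $T$.
   Context: $\{0,1\}^E$ carries the coordinatewise partial order; $f$ is increasing if $\omega\le\omega'$ implies $f(\omega)\le f(\omega')$. A probability measure $\mu$ on $\{0,1\}^E$ is monotonic if for every $e\in E$, every $F\subset E$, and every $\xi,\zeta\in\{0,1\}^F$ with $\xi\le\zeta$, $\mu[\omega_{e'}=\xi_{e'}\ \forall e'\in F]>0$ and $\mu[\omega_{e'}=\zeta_{e'}\ \forall e'\in F]>0$, one has $\mu[\omega_e=1\mid \omega_{e'}=\xi_{e'}\ \forall e'\in F]\le\mu[\omega_e=1\mid \omega_{e'}=\zeta_{e'}\ \forall e'\in F]$. Let $n=|E|$. For an $n$-tuple $e=(e_1,\dots,e_n)$ write $e_{[t]}=(e_1,\dots,e_t)$ and $\omega_{e_{[t]}}=(\omega_{e_1},\dots,\omega_{e_t})$. A decision tree is a pair $T=(e_1,(\phi_t)_{2\le t\le n})$ where $e_1\in E$ and each $\phi_t$ maps a pair $((e_1,\dots,e_{t-1}),\omega_{(e_1,\dots,e_{t-1})})$ (distinct elements of $E$ and their values) to an element of $E\setminus\{e_1,\dots,e_{t-1}\}$. Given $\omega\in\{0,1\}^E$,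 running $T$ on $\omega$ produces the ordering $(e_1,\dots,e_n)$ of $E$ defined inductively by $e_t=\phi_t((e_1,\dots,e_{t-1}),\omega_{(e_1,\dots,e_{t-1})})$ for $t\ge2$. Set $\tau(\omega)=\tau_{f,T}(\omega):=\min\{t\ge1:\ \forall\omega'\in\{0,1\}^E,\ \omega'_{e_{[t]}}=\omega_{e_{[t]}}\Rightarrow f(\omega')=f(\omega)\}$. *)

theory Defs
  imports "HOL-Probability.Probability"
begin

text \<open>Configurations: the ground set E is a finite type 'e; a configuration is 'e \<Rightarrow> bool
  (True = 1, False = 0), ordered coordinatewise by the function order on bool.\<close>

definition cylinder :: "'e set \<Rightarrow> ('e \<Rightarrow> bool) \<Rightarrow> ('e \<Rightarrow> bool) set" where
  "cylinder F \<xi> = {\<omega>. \<forall>e'\<in>F. \<omega> e' = \<xi> e'}"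

definition monotonic_measure :: "('e::finite \<Rightarrow> bool) pmf \<Rightarrow> bool" where
  "monotonic_measure \<mu> \<longleftrightarrow>
     (\<forall>e F \<xi> \<zeta>. (\<forall>e'\<in>F. \<xi> e' \<le> \<zeta> e') \<longrightarrow>
        measure_pmf.prob \<mu> (cylinder F \<xi>) > 0 \<longrightarrow> measure_pmf.prob \<mu> (cylinder F \<zeta>) > 0 \<longrightarrow>
        measure_pmf.prob \<mu> ({\<omega>. \<omega> e} \<inter> cylinder F \<xi>) / measure_pmf.prob \<mu> (cylinder F \<xi>)
        \<le> measure_pmf.prob \<mu> ({\<omega>. \<omega> e} \<inter> cylinder F \<zeta>) / measure_pmf.prob \<mu> (cylinder F \<zeta>))"

text \<open>A decision tree (e_1, (phi_t)) is encoded by one function on histories: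
  given the revealed history [(e_1,\<omega>_{e_1}),...,(e_{t-1},\<omega>_{e_{t-1}})] it returns e_t;
  e_1 is its value on the empty history.\<close>

definition decision_tree :: "(('e::finite \<times> bool) list \<Rightarrow> 'e) \<Rightarrow> bool" where
  "decision_tree \<phi> \<longleftrightarrow>
     (\<forall>h. distinct (map fst h) \<and> length h < CARD('e) \<longrightarrow> \<phi> h \<notin> set (map fst h))"

fun dt_order :: "(('e \<times> bool) list \<Rightarrow> 'e) \<Rightarrow> ('e \<Rightarrow> bool) \<Rightarrow> nat \<Rightarrow> 'e list" where
  "dt_order \<phi> \<omega> 0 = []"
| "dt_order \<phi> \<omega> (Suc t) =
     (let es = dt_order \<phi> \<omega> t in es @ [\<phi> (map (\<lambda>e. (e, \<omega> e)) es)])"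

definition tau :: "(('e \<Rightarrow> bool) \<Rightarrow> real) \<Rightarrow> (('e \<times> bool) list \<Rightarrow> 'e) \<Rightarrow> ('e \<Rightarrow> bool) \<Rightarrow> nat" where
  "tau f \<phi> \<omega> = (LEAST t. t \<ge> 1 \<and>
      (\<forall>\<omega>'. (\<forall>e\<in>set (dt_order \<phi> \<omega> t). \<omega>' e = \<omega> e) \<longrightarrow> f \<omega>' = f \<omega>))"

definition revealment :: "('e \<Rightarrow> bool) pmf \<Rightarrow> (('e \<Rightarrow> bool) \<Rightarrow> real) \<Rightarrow> (('e \<times> bool) list \<Rightarrow> 'e) \<Rightarrow> 'e \<Rightarrow> real" where
  "revealment \<mu> f \<phi> e =
     measure_pmf.prob \<mu> {\<omega>. \<exists>t. 1 \<le> t \<and> t \<le> tau f \<phi> \<omega> \<and> dt_order \<phi> \<omega> t ! (t - 1) = e}"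

definition covariance_pmf :: "'a pmf \<Rightarrow> ('a \<Rightarrow> real) \<Rightarrow> ('a \<Rightarrow> real) \<Rightarrow> real" where
  "covariance_pmf \<mu> X Y = measure_pmf.expectation \<mu> (\<lambda>\<omega>. (X \<omega> - measure_pmf.expectation \<mu> X) * (Y \<omega> - measure_pmf.expectation \<mu> Y))"

end

theory Submission
  imports Defs
begin


definition pp :: "bool \<Rightarrow> real \<Rightarrow> real \<Rightarrow> bool \<Rightarrow> bool \<Rightarrow> real" where
  "pp s p q a b = (if s then (if a then p else 1-p) * (if b then q else 1-q)
     else (if a then (if b then min p q else p - min p q) else (if b then q - min p q else 1 - max p q)))"

definition rho :: "real \<Rightarrow> real \<Rightarrow> real \<Rightarrow> bool \<Rightarrow> bool \<Rightarrow> bool \<Rightarrow> real" where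
  "rho p q1 q0 a b c = (if b then (if c then (if a then min p q0 else q0 - min p q0)
        else (if a then max 0 (min p q1 - q0) else (q1 - q0) - max 0 (min p q1 - q0)))
     else (if c then 0 else (if a then max 0 (p - q1) else 1 - max p q1)))"

lemma sum_bool: "(\<Sum>a\<in>UNIV. g a) = g True + (g False :: real)"
  by (simp add: UNIV_bool)

lemma pp_marg1: "(\<Sum>b\<in>UNIV. pp s p q a b) = (if a then p else 1 - p)"
  unfolding sum_bool pp_def by (cases s; cases a) (auto simp: min_def max_def algebra_simps)

lemma pp_marg2: "(\<Sum>a\<in>UNIV. pp s p q a b) = (if b then q else 1 - q)"
  unfolding sum_bool pp_def by (cases s; cases b) (auto simp: min_def max_def algebra_simps)

lemma pp_nonneg: "0 \<le> p \<Longrightarrow> p \<le> 1 \<Longrightarrow> 0 \<le> q \<Longrightarrow> q \<le> 1 \<Longrightarrow> 0 \<le> pp s p q a b"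
  unfolding pp_def by (cases s; cases a; cases b) (auto simp: min_def max_def)

lemma pp_pos: "0 \<le> p \<Longrightarrow> p \<le> 1 \<Longrightarrow> 0 \<le> q \<Longrightarrow> q \<le> 1 \<Longrightarrow> 0 < pp s p q a b \<Longrightarrow>
   (a \<longrightarrow> 0 < p) \<and> (\<not> a \<longrightarrow> p < 1) \<and> (b \<longrightarrow> 0 < q) \<and> (\<not> b \<longrightarrow> q < 1)"
  unfolding pp_def by (cases s; cases a; cases b) (auto simp: min_def max_def zero_less_mult_iff split: if_splits)

lemma pp_diag: "pp False p p a b = (if a = b then (if a then p else 1 - p) else 0)"
  unfolding pp_def by (cases a; cases b) auto

lemma pp_True: "pp True p q a b = (if a then p else 1-p) * (if b then q else 1-q)"
  unfolding pp_def by simp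

lemma pp_diff: "pp False p q a b - pp True p q a b = (if a = b then 1 else -1) * (min p q - p * q)"
  unfolding pp_def by (cases a; cases b) (auto simp: min_def max_def algebra_simps)

context
  fixes p q1 q0 :: real
  assumes b: "0 \<le> p" "p \<le> 1" "0 \<le> q0" "q0 \<le> q1" "q1 \<le> 1"
begin
lemma rho_nonneg: "0 \<le> rho p q1 q0 a b c"
  using b unfolding rho_def by (cases a; cases b; cases c) (auto simp: min_def max_def)
lemma rho_marg1: "(\<Sum>c\<in>UNIV. rho p q1 q0 a b c) = pp False p q1 a b"
  using b unfolding rho_def pp_def sum_bool by (cases a; cases b) (auto simp: min_def max_def)
lemma rho_marg2: "(\<Sum>b\<in>UNIV. rho p q1 q0 a b c) = pp False p q0 a c"
  using b unfolding rho_def pp_def sum_bool by (cases a; cases c) (auto simp: min_def max_def)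
lemma rho_pos: "0 < rho p q1 q0 a b c \<Longrightarrow> (c \<longrightarrow> b) \<and> (a \<longrightarrow> 0 < p) \<and> (\<not> a \<longrightarrow> p < 1) \<and>
   (b \<longrightarrow> 0 < q1) \<and> (\<not> b \<longrightarrow> q1 < 1) \<and> (c \<longrightarrow> 0 < q0) \<and> (\<not> c \<longrightarrow> q0 < 1)"
  using b unfolding rho_def by (cases a; cases b; cases c) (auto simp: min_def max_def split: if_splits)
end

lemma coupling_bound:
  fixes rho :: "bool \<Rightarrow> bool \<Rightarrow> bool \<Rightarrow> real" and K1 K0 pp1 pp0 :: "bool \<Rightarrow> bool \<Rightarrow> real"
    and E1 E0 :: "bool \<Rightarrow> real"
  assumes m1: "\<And>a b. pp1 a b = (\<Sum>c\<in>UNIV. rho a b c)"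
    and m2: "\<And>a c. pp0 a c = (\<Sum>b\<in>UNIV. rho a b c)"
    and l: "\<And>a b c. 0 \<le> rho a b c * (K1 a b - K0 a c)"
    and u: "\<And>a b c. rho a b c * (K1 a b - K0 a c) \<le> rho a b c * (E1 b - E0 c)"
  shows "0 \<le> (\<Sum>a\<in>UNIV. \<Sum>b\<in>UNIV. pp1 a b * K1 a b) - (\<Sum>a\<in>UNIV. \<Sum>c\<in>UNIV. pp0 a c * K0 a c)"
    and "(\<Sum>a\<in>UNIV. \<Sum>b\<in>UNIV. pp1 a b * K1 a b) - (\<Sum>a\<in>UNIV. \<Sum>c\<in>UNIV. pp0 a c * K0 a c)
         \<le> (\<Sum>b\<in>UNIV. (\<Sum>a\<in>UNIV. pp1 a b) * E1 b) - (\<Sum>c\<in>UNIV. (\<Sum>a\<in>UNIV. pp0 a c) * E0 c)"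
proof -
  have eq: "(\<Sum>a\<in>UNIV. \<Sum>b\<in>UNIV. pp1 a b * K1 a b) - (\<Sum>a\<in>UNIV. \<Sum>c\<in>UNIV. pp0 a c * K0 a c)
     = (\<Sum>a\<in>UNIV. \<Sum>b\<in>UNIV. \<Sum>c\<in>UNIV. rho a b c * (K1 a b - K0 a c))"
    unfolding m1 m2 sum_bool by (simp add: algebra_simps)
  have eq2: "(\<Sum>b\<in>UNIV. (\<Sum>a\<in>UNIV. pp1 a b) * E1 b) - (\<Sum>c\<in>UNIV. (\<Sum>a\<in>UNIV. pp0 a c) * E0 c)
     = (\<Sum>a\<in>UNIV. \<Sum>b\<in>UNIV. \<Sum>c\<in>UNIV. rho a b c * (E1 b - E0 c))"
    unfolding m1 m2 sum_bool by (simp add: algebra_simps)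
  show "0 \<le> (\<Sum>a\<in>UNIV. \<Sum>b\<in>UNIV. pp1 a b * K1 a b) - (\<Sum>a\<in>UNIV. \<Sum>c\<in>UNIV. pp0 a c * K0 a c)"
    unfolding eq by (intro sum_nonneg) (rule l)
  show "(\<Sum>a\<in>UNIV. \<Sum>b\<in>UNIV. pp1 a b * K1 a b) - (\<Sum>a\<in>UNIV. \<Sum>c\<in>UNIV. pp0 a c * K0 a c)
         \<le> (\<Sum>b\<in>UNIV. (\<Sum>a\<in>UNIV. pp1 a b) * E1 b) - (\<Sum>c\<in>UNIV. (\<Sum>a\<in>UNIV. pp0 a c) * E0 c)"
    unfolding eq eq2 by (intro sum_mono) (rule u)
qed

locale osss =
  fixes \<mu> :: "('e::finite \<Rightarrow> bool) pmf" and f :: "('e \<Rightarrow> bool) \<Rightarrow> real"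
    and \<phi> :: "('e \<times> bool) list \<Rightarrow> 'e"
  assumes fmono: "mono f" and fbnd: "\<And>\<omega>. 0 \<le> f \<omega> \<and> f \<omega> \<le> 1"
    and mm: "monotonic_measure \<mu>" and dt: "decision_tree \<phi>"
begin

definition S :: "'e set \<Rightarrow> ('e \<Rightarrow> bool) \<Rightarrow> (('e \<Rightarrow> bool) \<Rightarrow> real) \<Rightarrow> real" where
  "S F \<xi> g = (\<Sum>\<omega>\<in>cylinder F \<xi>. pmf \<mu> \<omega> * g \<omega>)"
definition P :: "'e set \<Rightarrow> ('e \<Rightarrow> bool) \<Rightarrow> real" where
  "P F \<xi> = S F \<xi> (\<lambda>_. 1)"
definition CE :: "(('e \<Rightarrow> bool) \<Rightarrow> real) \<Rightarrow> 'e set \<Rightarrow> ('e \<Rightarrow> bool) \<Rightarrow> real" where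
  "CE g F \<xi> = S F \<xi> g / P F \<xi>"
definition pr :: "'e set \<Rightarrow> ('e \<Rightarrow> bool) \<Rightarrow> 'e \<Rightarrow> real" where
  "pr F \<xi> e = P (insert e F) (\<xi>(e:=True)) / P F \<xi>"

lemma cyl_split:
  assumes "e \<notin> F"
  shows "cylinder F \<xi> = cylinder (insert e F) (\<xi>(e:=True)) \<union> cylinder (insert e F) (\<xi>(e:=False))"
    and "cylinder (insert e F) (\<xi>(e:=True)) \<inter> cylinder (insert e F) (\<xi>(e:=False)) = {}"
  using assms unfolding cylinder_def by (auto split: if_splits)

lemma S_split:
  assumes "e \<notin> F"
  shows "S F \<xi> g = S (insert e F) (\<xi>(e:=True)) g + S (insert e F) (\<xi>(e:=False)) g"
  unfolding S_def by (subst cyl_split(1)[OF assms], rule sum.union_disjoint) (auto simp: cyl_split(2)[OF assms])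

lemma P_nonneg: "0 \<le> P F \<xi>"
  unfolding P_def S_def by (simp add: sum_nonneg)

lemma S_cong: "(\<And>\<omega>. \<omega> \<in> cylinder F \<xi> \<Longrightarrow> g \<omega> = h \<omega>) \<Longrightarrow> S F \<xi> g = S F \<xi> h"
  unfolding S_def by (rule sum.cong) auto

lemma S_P0: assumes "P F \<xi> = 0" shows "S F \<xi> g = 0"
proof -
  have "\<forall>\<omega>\<in>cylinder F \<xi>. pmf \<mu> \<omega> * 1 = 0"
    using assms unfolding P_def S_def by (subst sum_nonneg_eq_0_iff[symmetric]) auto
  then show ?thesis unfolding S_def by simp
qed

lemma CE_P0: "P F \<xi> = 0 \<Longrightarrow> CE g F \<xi> = 0"
  unfolding CE_def by simp

lemma S_mono: "(\<And>\<omega>. g \<omega> \<le> h \<omega>) \<Longrightarrow> S F \<xi> g \<le> S F \<xi> h"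
  unfolding S_def by (rule sum_mono) (simp add: mult_left_mono)

lemma S_nonneg: "(\<And>\<omega>. 0 \<le> g \<omega>) \<Longrightarrow> 0 \<le> S F \<xi> g"
  unfolding S_def by (simp add: sum_nonneg)

lemma S_const: "S F \<xi> (\<lambda>_. c) = c * P F \<xi>"
  unfolding S_def P_def by (simp add: sum_distrib_left mult.commute)

lemma P_children:
  assumes "e \<notin> F"
  shows "P (insert e F) (\<xi>(e:=True)) = pr F \<xi> e * P F \<xi>"
    and "P (insert e F) (\<xi>(e:=False)) = (1 - pr F \<xi> e) * P F \<xi>"
    and "0 \<le> pr F \<xi> e" and "pr F \<xi> e \<le> 1"
proof -
  have sp: "P F \<xi> = P (insert e F) (\<xi>(e:=True)) + P (insert e F) (\<xi>(e:=False))"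
    unfolding P_def by (rule S_split[OF assms])
  have n1: "0 \<le> P (insert e F) (\<xi>(e:=True))" and n0: "0 \<le> P (insert e F) (\<xi>(e:=False))"
    by (rule P_nonneg)+
  show "P (insert e F) (\<xi>(e:=True)) = pr F \<xi> e * P F \<xi>"
    using sp n1 n0 unfolding pr_def by (cases "P F \<xi> = 0") auto
  show "P (insert e F) (\<xi>(e:=False)) = (1 - pr F \<xi> e) * P F \<xi>"
    using sp n1 n0 unfolding pr_def by (cases "P F \<xi> = 0") (auto simp: field_simps)
  show "0 \<le> pr F \<xi> e" unfolding pr_def using n1 P_nonneg by simp
  show "pr F \<xi> e \<le> 1" unfolding pr_def using sp n1 n0
    by (cases "P F \<xi> = 0") (auto simp: divide_le_eq_1)
qed

lemma pos_of_pr: "0 < pr F \<xi> e \<Longrightarrow> 0 < P F \<xi>"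
  using P_nonneg[of F \<xi>] unfolding pr_def by (cases "P F \<xi> = 0") auto

lemma child_pos:
  assumes "e \<notin> F" "P F \<xi> > 0"
  shows "pr F \<xi> e > 0 \<Longrightarrow> P (insert e F) (\<xi>(e:=True)) > 0"
    and "pr F \<xi> e < 1 \<Longrightarrow> P (insert e F) (\<xi>(e:=False)) > 0"
  using P_children[OF assms(1), of \<xi>] assms(2) by auto

lemma tower:
  assumes "e \<notin> F"
  shows "CE g F \<xi> = pr F \<xi> e * CE g (insert e F) (\<xi>(e:=True))
                 + (1 - pr F \<xi> e) * CE g (insert e F) (\<xi>(e:=False))"
proof (cases "P F \<xi> = 0")
  case True
  then show ?thesis using P_children[OF assms, of \<xi>] by (simp add: CE_def pr_def S_P0)
next
  case False
  then have pos: "P F \<xi> > 0" using P_nonneg[of F \<xi>] by simp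
  note pc = P_children[OF assms, of \<xi>]
  have s: "S F \<xi> g = S (insert e F) (\<xi>(e:=True)) g + S (insert e F) (\<xi>(e:=False)) g"
    by (rule S_split[OF assms])
  have a: "pr F \<xi> e * CE g (insert e F) (\<xi>(e:=True)) = S (insert e F) (\<xi>(e:=True)) g / P F \<xi>"
  proof (cases "pr F \<xi> e = 0")
    case True
    then have "P (insert e F) (\<xi>(e:=True)) = 0" using pc by simp
    then show ?thesis using True by (simp add: S_P0)
  next
    case False
    then show ?thesis unfolding CE_def pc(1) using pos by (simp add: field_simps)
  qed
  have b: "(1 - pr F \<xi> e) * CE g (insert e F) (\<xi>(e:=False)) = S (insert e F) (\<xi>(e:=False)) g / P F \<xi>"
  proof (cases "1 - pr F \<xi> e = 0")
    case True
    then have "P (insert e F) (\<xi>(e:=False)) = 0" using pc by simp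
    then show ?thesis using True by (simp add: S_P0)
  next
    case False
    then show ?thesis unfolding CE_def pc(2) using pos by (simp add: field_simps)
  qed
  show ?thesis unfolding a b by (simp add: CE_def s add_divide_distrib)
qed

lemma CE_f_bnd: "0 \<le> CE f F \<xi>" "CE f F \<xi> \<le> 1"
proof -
  have "0 \<le> S F \<xi> f" by (rule S_nonneg) (use fbnd in auto)
  then show "0 \<le> CE f F \<xi>" unfolding CE_def using P_nonneg by simp
  have "S F \<xi> f \<le> P F \<xi>" unfolding P_def by (rule S_mono) (use fbnd in auto)
  then show "CE f F \<xi> \<le> 1" unfolding CE_def using P_nonneg[of F \<xi>]
    by (cases "P F \<xi> = 0") (auto simp: divide_le_eq_1)
qed

lemma prob_eq_P: "measure_pmf.prob \<mu> (cylinder F \<xi>) = P F \<xi>"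
  unfolding P_def S_def by (simp add: measure_measure_pmf_finite)

lemma cyl_ins: "r \<notin> F \<Longrightarrow> {\<omega>. \<omega> r} \<inter> cylinder F \<xi> = cylinder (insert r F) (\<xi>(r:=True))"
  unfolding cylinder_def by auto

lemma pr_mono:
  assumes "r \<notin> F" "\<forall>e\<in>F. \<xi> e \<le> \<zeta> e" "P F \<xi> > 0" "P F \<zeta> > 0"
  shows "pr F \<xi> r \<le> pr F \<zeta> r"
proof -
  have "measure_pmf.prob \<mu> ({\<omega>. \<omega> r} \<inter> cylinder F \<xi>) / measure_pmf.prob \<mu> (cylinder F \<xi>)
     \<le> measure_pmf.prob \<mu> ({\<omega>. \<omega> r} \<inter> cylinder F \<zeta>) / measure_pmf.prob \<mu> (cylinder F \<zeta>)"
    using mm assms unfolding monotonic_measure_def prob_eq_P by blast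
  then show ?thesis unfolding pr_def cyl_ins[OF assms(1)] prob_eq_P .
qed

lemma cyl_UNIV: "cylinder UNIV \<xi> = {\<xi>}"
  unfolding cylinder_def by auto

lemma CE_mono:
  assumes "mono g" "\<forall>e\<in>F. \<xi> e \<le> \<zeta> e" "P F \<xi> > 0" "P F \<zeta> > 0"
  shows "CE g F \<xi> \<le> CE g F \<zeta>"
  using assms(2-)
proof (induction "card (- F)" arbitrary: F \<xi> \<zeta> rule: less_induct)
  case less
  show ?case
  proof (cases "F = UNIV")
    case True
    have "\<xi> \<le> \<zeta>" using less.prems True by (simp add: le_fun_def)
    then have "g \<xi> \<le> g \<zeta>" using assms(1) by (simp add: mono_def)
    moreover have "CE g F \<xi> = g \<xi>" "CE g F \<zeta> = g \<zeta>"
      using less.prems True unfolding CE_def P_def S_def by (auto simp: cyl_UNIV)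
    ultimately show ?thesis by simp
  next
    case False
    then obtain r where r: "r \<notin> F" by auto
    have lt: "card (- insert r F) < card (- F)"
      using r by (metis Compl_iff card_Diff1_less Compl_insert finite)
    define q0 where "q0 = pr F \<xi> r"
    define q1 where "q1 = pr F \<zeta> r"
    define A0 where "A0 = CE g (insert r F) (\<xi>(r:=False))"
    define A1 where "A1 = CE g (insert r F) (\<xi>(r:=True))"
    define B0 where "B0 = CE g (insert r F) (\<zeta>(r:=False))"
    define B1 where "B1 = CE g (insert r F) (\<zeta>(r:=True))"
    have IH: "CE g (insert r F) (\<xi>'(r:=c)) \<le> CE g (insert r F) (\<zeta>'(r:=b))"
      if "\<forall>e\<in>F. \<xi>' e \<le> \<zeta>' e" "c \<le> b" "P (insert r F) (\<xi>'(r:=c)) > 0"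
         "P (insert r F) (\<zeta>'(r:=b)) > 0" for \<xi>' \<zeta>' c b
      using less.hyps[OF lt, of "\<xi>'(r:=c)" "\<zeta>'(r:=b)"] that by auto
    have q: "q0 \<le> q1" unfolding q0_def q1_def by (rule pr_mono[OF r less.prems])
    note pcx = P_children[OF r, of \<xi>, folded q0_def]
    note pcz = P_children[OF r, of \<zeta>, folded q1_def]
    have px1: "q0 > 0 \<Longrightarrow> P (insert r F) (\<xi>(r:=True)) > 0" using pcx less.prems by simp
    have px0: "q0 < 1 \<Longrightarrow> P (insert r F) (\<xi>(r:=False)) > 0" using pcx less.prems by simp
    have pz1: "q1 > 0 \<Longrightarrow> P (insert r F) (\<zeta>(r:=True)) > 0" using pcz less.prems by simp
    have pz0: "q1 < 1 \<Longrightarrow> P (insert r F) (\<zeta>(r:=False)) > 0" using pcz less.prems by simp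
    have h00: "q0 < 1 \<Longrightarrow> q1 < 1 \<Longrightarrow> A0 \<le> B0" unfolding A0_def B0_def
      using IH[OF less.prems(1), of False False] px0 pz0 by simp
    have h11: "q0 > 0 \<Longrightarrow> q1 > 0 \<Longrightarrow> A1 \<le> B1" unfolding A1_def B1_def
      using IH[OF less.prems(1), of True True] px1 pz1 by simp
    have h01: "q0 < 1 \<Longrightarrow> q1 > 0 \<Longrightarrow> A0 \<le> B1" unfolding A0_def B1_def
      using IH[OF less.prems(1), of False True] px0 pz1 by simp
    have hA: "q0 < 1 \<Longrightarrow> q0 > 0 \<Longrightarrow> A0 \<le> A1" unfolding A0_def A1_def
      using IH[of \<xi> \<xi> False True] px0 px1 by simp
    have key: "q0 * A1 + (1 - q0) * A0 \<le> q1 * B1 + (1 - q1) * B0"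
    proof -
      have b: "0 \<le> q0" "q1 \<le> 1" "q0 \<le> 1" "0 \<le> q1" using pcx pcz by auto
      consider "q0 = 0" | "q0 = 1" | "0 < q0 \<and> q0 < 1" using b by fastforce
      then show ?thesis
      proof cases
        case 1
        then have L: "q0 * A1 + (1 - q0) * A0 = A0" by simp
        consider "q1 = 0" | "q1 = 1" | "0 < q1 \<and> q1 < 1" using b by fastforce
        then show ?thesis
        proof cases
          case 3
          have "q1 * A0 \<le> q1 * B1" using h01 1 3 by (intro mult_left_mono) auto
          moreover have "(1 - q1) * A0 \<le> (1 - q1) * B0" using h00 1 3 by (intro mult_left_mono) auto
          ultimately show ?thesis unfolding L by (simp add: algebra_simps)
        qed (use L h00 h01 1 in auto)
      next
        case 2
        then have "q1 = 1" using q b by simp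
        then show ?thesis using 2 h11 by simp
      next
        case 3
        have "q0 * (A1 - A0) \<le> q1 * (A1 - A0)" using hA 3 q by (intro mult_right_mono) auto
        moreover have "q1 * A1 \<le> q1 * B1" using h11 3 q by (intro mult_left_mono) auto
        moreover have "(1 - q1) * A0 \<le> (1 - q1) * B0" if "q1 < 1" using h00 3 that by (intro mult_left_mono) auto
        moreover have "q1 = 1 \<or> q1 < 1" using b by linarith
        ultimately show ?thesis by (auto simp: algebra_simps)
      qed
    qed
    show ?thesis using key unfolding tower[OF r, where g=g and \<xi>=\<xi>] tower[OF r, where g=g and \<xi>=\<zeta>]
      q0_def q1_def A0_def A1_def B0_def B1_def by simp
  qed
qed

definition ind :: "'e \<Rightarrow> ('e \<Rightarrow> bool) \<Rightarrow> real" where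
  "ind e \<omega> = (if \<omega> e then 1 else 0)"
definition CC :: "'e set \<Rightarrow> ('e \<Rightarrow> bool) \<Rightarrow> 'e \<Rightarrow> real" where
  "CC F \<zeta> e = CE (\<lambda>\<omega>. f \<omega> * ind e \<omega>) F \<zeta> - CE f F \<zeta> * CE (ind e) F \<zeta>"

lemma ind_mono: "mono (ind e)"
  unfolding mono_def ind_def le_fun_def by auto

lemma S_zero: "S F \<xi> (\<lambda>_. 0) = 0"
  unfolding S_def by simp

lemma CE_one: "q * CE (\<lambda>_. 1) (insert e F) (\<zeta>(e:=True)) = q" if "q = pr F \<zeta> e" "e \<notin> F"
proof (cases "P (insert e F) (\<zeta>(e:=True)) = 0")
  case True
  then have "q = 0" using that unfolding pr_def by simp
  then show ?thesis by simp
next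
  case False
  then show ?thesis unfolding CE_def P_def[symmetric] by simp
qed

lemma CC_formula:
  assumes "e \<notin> F"
  shows "CC F \<zeta> e = pr F \<zeta> e * (1 - pr F \<zeta> e) *
      (CE f (insert e F) (\<zeta>(e:=True)) - CE f (insert e F) (\<zeta>(e:=False)))"
proof -
  define q where "q = pr F \<zeta> e"
  have c1: "cylinder (insert e F) (\<zeta>(e:=True)) \<subseteq> {\<omega>. \<omega> e}"
    and c0: "cylinder (insert e F) (\<zeta>(e:=False)) \<subseteq> {\<omega>. \<not> \<omega> e}"
    unfolding cylinder_def by auto
  have a: "CE (\<lambda>\<omega>. f \<omega> * ind e \<omega>) (insert e F) (\<zeta>(e:=True)) = CE f (insert e F) (\<zeta>(e:=True))"
    unfolding CE_def by (rule arg_cong[where f="\<lambda>x. x / _"], rule S_cong) (use c1 in \<open>auto simp: ind_def\<close>)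
  have b: "CE (\<lambda>\<omega>. f \<omega> * ind e \<omega>) (insert e F) (\<zeta>(e:=False)) = 0"
    unfolding CE_def by (subst S_cong[where h="\<lambda>_. 0"]) (use c0 in \<open>auto simp: ind_def S_zero\<close>)
  have c: "CE (ind e) (insert e F) (\<zeta>(e:=True)) = CE (\<lambda>_. 1) (insert e F) (\<zeta>(e:=True))"
    unfolding CE_def by (rule arg_cong[where f="\<lambda>x. x / _"], rule S_cong) (use c1 in \<open>auto simp: ind_def\<close>)
  have d: "CE (ind e) (insert e F) (\<zeta>(e:=False)) = 0"
    unfolding CE_def by (subst S_cong[where h="\<lambda>_. 0"]) (use c0 in \<open>auto simp: ind_def S_zero\<close>)
  have e1: "CE (ind e) F \<zeta> = q"
    unfolding tower[OF assms, where g="ind e"] c d q_def[symmetric] using CE_one[OF q_def assms] by simp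
  show ?thesis unfolding CC_def e1 tower[OF assms, where g="\<lambda>\<omega>. f \<omega> * ind e \<omega>"] a b
      tower[OF assms, where g=f] q_def[symmetric]
    by (simp add: algebra_simps)
qed

lemma CC_nonneg:
  assumes "e \<notin> F"
  shows "0 \<le> CC F \<zeta> e"
proof -
  define q where "q = pr F \<zeta> e"
  note pc = P_children[OF assms, of \<zeta>, folded q_def]
  show ?thesis
  proof (cases "0 < q \<and> q < 1")
    case True
    then have pos: "P F \<zeta> > 0" using pos_of_pr q_def by auto
    have "CE f (insert e F) (\<zeta>(e:=False)) \<le> CE f (insert e F) (\<zeta>(e:=True))"
      by (rule CE_mono[OF fmono]) (use child_pos[OF assms pos] True q_def in auto)
    then show ?thesis unfolding CC_formula[OF assms] q_def[symmetric] using True by simp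
  next
    case False
    then have "q = 0 \<or> q = 1" using pc by fastforce
    then show ?thesis unfolding CC_formula[OF assms] q_def[symmetric] by auto
  qed
qed

lemma CC_step:
  assumes r: "r \<notin> F" and e: "e \<notin> insert r F"
  shows "pr F \<zeta> r * CC (insert r F) (\<zeta>(r:=True)) e
       + (1 - pr F \<zeta> r) * CC (insert r F) (\<zeta>(r:=False)) e \<le> CC F \<zeta> e"
proof -
  define u where "u = pr F \<zeta> r"
  define F1 where "F1 = CE f (insert r F) (\<zeta>(r:=True))"
  define F0 where "F0 = CE f (insert r F) (\<zeta>(r:=False))"
  define G1 where "G1 = CE (ind e) (insert r F) (\<zeta>(r:=True))"
  define G0 where "G0 = CE (ind e) (insert r F) (\<zeta>(r:=False))"
  define A1 where "A1 = CE (\<lambda>\<omega>. f \<omega> * ind e \<omega>) (insert r F) (\<zeta>(r:=True))"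
  define A0 where "A0 = CE (\<lambda>\<omega>. f \<omega> * ind e \<omega>) (insert r F) (\<zeta>(r:=False))"
  have id: "CC F \<zeta> e - (u * CC (insert r F) (\<zeta>(r:=True)) e + (1 - u) * CC (insert r F) (\<zeta>(r:=False)) e)
      = u * (1 - u) * ((F1 - F0) * (G1 - G0))"
    unfolding CC_def tower[OF r, where g=f] tower[OF r, where g="ind e"]
      tower[OF r, where g="\<lambda>\<omega>. f \<omega> * ind e \<omega>"] u_def[symmetric]
      F1_def[symmetric] F0_def[symmetric] G1_def[symmetric] G0_def[symmetric] A1_def[symmetric] A0_def[symmetric]
    by algebra
  note pc = P_children[OF r, of \<zeta>, folded u_def]
  have "0 \<le> u * (1 - u) * ((F1 - F0) * (G1 - G0))"
  proof (cases "0 < u \<and> u < 1")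
    case True
    then have pos: "P F \<zeta> > 0" using pos_of_pr u_def by auto
    have "F0 \<le> F1" unfolding F0_def F1_def
      by (rule CE_mono[OF fmono]) (use child_pos[OF r pos] True u_def in auto)
    moreover have "G0 \<le> G1" unfolding G0_def G1_def
      by (rule CE_mono[OF ind_mono]) (use child_pos[OF r pos] True u_def in auto)
    ultimately show ?thesis using True by simp
  next
    case False
    then have "u = 0 \<or> u = 1" using pc by fastforce
    then show ?thesis by auto
  qed
  then show ?thesis using id unfolding u_def by linarith
qed

end

context osss begin

lemma P_child: "e \<notin> F \<Longrightarrow> P (insert e F) (\<xi>(e:=a)) = (if a then pr F \<xi> e else 1 - pr F \<xi> e) * P F \<xi>"
  using P_children by (cases a) auto

lemma child_pos': "e \<notin> F \<Longrightarrow> P F \<xi> > 0 \<Longrightarrow> (a \<longrightarrow> 0 < pr F \<xi> e) \<Longrightarrow> (\<not> a \<longrightarrow> pr F \<xi> e < 1)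
   \<Longrightarrow> P (insert e F) (\<xi>(e:=a)) > 0"
  using child_pos by (cases a) auto

lemma pr_bnd: "e \<notin> F \<Longrightarrow> 0 \<le> pr F \<xi> e \<and> pr F \<xi> e \<le> 1"
  using P_children by auto

lemma tower': "e \<notin> F \<Longrightarrow> (\<Sum>a\<in>UNIV. (if a then pr F \<xi> e else 1 - pr F \<xi> e) * CE g (insert e F) (\<xi>(e:=a))) = CE g F \<xi>"
  using tower[of e F g \<xi>] by (simp add: sum_bool)

lemma cyl_child_sub: "e \<notin> F \<Longrightarrow> cylinder (insert e F) (\<xi>(e:=a)) \<subseteq> cylinder F \<xi>"
  unfolding cylinder_def by auto

definition nxt :: "'e list \<Rightarrow> ('e \<Rightarrow> bool) \<Rightarrow> 'e" where
  "nxt es \<xi> = \<phi> (map (\<lambda>x. (x, \<xi> x)) es)"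

definition ok :: "'e list \<Rightarrow> nat \<Rightarrow> bool" where
  "ok es k \<longleftrightarrow> distinct es \<and> length es + k \<le> CARD('e)"

lemma nxt_new: "ok es (Suc k) \<Longrightarrow> nxt es \<xi> \<notin> set es"
proof -
  assume a: "ok es (Suc k)"
  have m: "map fst (map (\<lambda>x. (x, \<xi> x)) es) = es" by (induction es) auto
  have "distinct (map fst (map (\<lambda>x. (x, \<xi> x)) es)) \<and> length (map (\<lambda>x. (x, \<xi> x)) es) < CARD('e)"
    using a unfolding m ok_def by simp
  then have "\<phi> (map (\<lambda>x. (x, \<xi> x)) es) \<notin> set (map fst (map (\<lambda>x. (x, \<xi> x)) es))"
    using dt unfolding decision_tree_def by blast
  then show ?thesis unfolding m nxt_def .
qed

lemma ok_step: "ok es (Suc k) \<Longrightarrow> ok (es @ [nxt es \<xi>]) k"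
  using nxt_new[of es k \<xi>] unfolding ok_def by auto

fun Proc :: "(nat \<Rightarrow> bool) \<Rightarrow> nat \<Rightarrow> 'e list \<Rightarrow> ('e \<Rightarrow> bool) \<Rightarrow> ('e \<Rightarrow> bool) \<Rightarrow> real" where
  "Proc st 0 es \<xi> \<zeta> = CE f (set es) \<xi> * CE f (set es) \<zeta>"
| "Proc st (Suc k) es \<xi> \<zeta> = (let e = nxt es \<xi>; p = pr (set es) \<xi> e; q = pr (set es) \<zeta> e in
     (\<Sum>a\<in>UNIV. \<Sum>b\<in>UNIV. pp (st (length es)) p q a b * Proc st k (es @ [e]) (\<xi>(e:=a)) (\<zeta>(e:=b))))"

lemma Proc_cong: "(\<forall>i\<ge>length es. st i = st' i) \<Longrightarrow> Proc st k es \<xi> \<zeta> = Proc st' k es \<xi> \<zeta>"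
proof (induction k arbitrary: es \<xi> \<zeta>)
  case (Suc k)
  have eq: "Proc st k (es@[e]) (\<xi>(e:=a)) (\<zeta>(e:=b)) = Proc st' k (es@[e]) (\<xi>(e:=a)) (\<zeta>(e:=b))" for e a b
    by (rule Suc.IH) (use Suc.prems in auto)
  have "st (length es) = st' (length es)" using Suc.prems by auto
  then show ?case by (simp only: Proc.simps Let_def eq)
qed simp


end

context osss begin
lemma Proc_zero: "ok es k \<Longrightarrow> P (set es) \<xi> = 0 \<or> P (set es) \<zeta> = 0 \<Longrightarrow> Proc st k es \<xi> \<zeta> = 0"
proof (induction k arbitrary: es \<xi> \<zeta>)
  case 0
  then show ?case by (auto simp: CE_P0)
next
  case (Suc k)
  define e where "e = nxt es \<xi>"
  have e: "e \<notin> set es" using nxt_new[OF Suc.prems(1)] e_def by simp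
  have "Proc st k (es @ [e]) (\<xi>(e:=a)) (\<zeta>(e:=b)) = 0" for a b
  proof (rule Suc.IH)
    show "ok (es @ [e]) k" using ok_step[OF Suc.prems(1)] e_def by simp
    show "P (set (es @ [e])) (\<xi>(e:=a)) = 0 \<or> P (set (es @ [e])) (\<zeta>(e:=b)) = 0"
      using P_child[OF e, of \<xi> a] P_child[OF e, of \<zeta> b] Suc.prems(2) by auto
  qed
  then show ?case by (simp only: Proc.simps Let_def e_def[symmetric] mult_zero_right sum.neutral_const)
qed

lemma Proc_indep:
  "ok es k \<Longrightarrow> (\<forall>i. length es \<le> i \<longrightarrow> i < length es + k \<longrightarrow> st i)
   \<Longrightarrow> Proc st k es \<xi> \<zeta> = CE f (set es) \<xi> * CE f (set es) \<zeta>"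
proof (induction k arbitrary: es \<xi> \<zeta>)
  case 0
  then show ?case by simp
next
  case (Suc k)
  define e where "e = nxt es \<xi>"
  have e: "e \<notin> set es" using nxt_new[OF Suc.prems(1)] e_def by simp
  have st: "st (length es)" using Suc.prems by auto
  have IH: "Proc st k (es @ [e]) (\<xi>(e:=a)) (\<zeta>(e:=b)) = CE f (insert e (set es)) (\<xi>(e:=a)) * CE f (insert e (set es)) (\<zeta>(e:=b))" for a b
    using Suc.IH[of "es @ [e]"] ok_step[OF Suc.prems(1)] Suc.prems(2) e_def by auto
  have "Proc st (Suc k) es \<xi> \<zeta> =
     (\<Sum>a\<in>UNIV. (if a then pr (set es) \<xi> e else 1 - pr (set es) \<xi> e) * CE f (insert e (set es)) (\<xi>(e:=a))) *
     (\<Sum>b\<in>UNIV. (if b then pr (set es) \<zeta> e else 1 - pr (set es) \<zeta> e) * CE f (insert e (set es)) (\<zeta>(e:=b)))"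
    by (simp add: Let_def e_def[symmetric] IH st pp_True sum_bool algebra_simps)
  then show ?case unfolding tower'[OF e] .
qed

lemma cyl_full: "ok es k \<Longrightarrow> length es + k = CARD('e) \<Longrightarrow> k = 0 \<Longrightarrow> set es = UNIV"
  unfolding ok_def by (metis add.right_neutral card_subset_eq distinct_card finite subset_UNIV card_UNIV_length_enum)

lemma Proc_diag:
  "ok es k \<Longrightarrow> length es + k = CARD('e) \<Longrightarrow> (\<forall>i\<ge>length es. \<not> st i)
   \<Longrightarrow> Proc st k es \<xi> \<xi> = CE (\<lambda>\<omega>. f \<omega> * f \<omega>) (set es) \<xi>"
proof (induction k arbitrary: es \<xi>)
  case 0
  then have U: "set es = UNIV" using cyl_full by blast
  have c: "cylinder (set es) \<xi> = {\<xi>}" using U cyl_UNIV by simp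
  show ?case by (cases "pmf \<mu> \<xi> = 0") (simp_all add: CE_def S_def P_def c)
next
  case (Suc k)
  define e where "e = nxt es \<xi>"
  have e: "e \<notin> set es" using nxt_new[OF Suc.prems(1)] e_def by simp
  have st: "\<not> st (length es)" using Suc.prems by auto
  have IH: "Proc st k (es @ [e]) (\<xi>(e:=a)) (\<xi>(e:=a)) = CE (\<lambda>\<omega>. f \<omega> * f \<omega>) (insert e (set es)) (\<xi>(e:=a))" for a
    using Suc.IH[of "es @ [e]"] ok_step[OF Suc.prems(1)] Suc.prems(2,3) e_def by auto
  have "Proc st (Suc k) es \<xi> \<xi> =
     (\<Sum>a\<in>UNIV. (if a then pr (set es) \<xi> e else 1 - pr (set es) \<xi> e) * CE (\<lambda>\<omega>. f \<omega> * f \<omega>) (insert e (set es)) (\<xi>(e:=a)))"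
    by (simp add: Let_def e_def[symmetric] IH st pp_diag sum_bool)
  then show ?case unfolding tower'[OF e] .
qed

end

context osss begin

lemma swap_marg: fixes g :: "bool \<Rightarrow> bool \<Rightarrow> real" shows "(\<Sum>a\<in>UNIV. \<Sum>b\<in>UNIV. g a b * X b) = (\<Sum>b\<in>UNIV. (\<Sum>a\<in>UNIV. g a b) * (X b :: real))"
  by (simp add: sum_bool algebra_simps)

lemma CE_const: "P F \<xi> > 0 \<Longrightarrow> (\<forall>\<omega>\<in>cylinder F \<xi>. g \<omega> = c) \<Longrightarrow> CE g F \<xi> = c"
  unfolding CE_def by (subst S_cong[where h="\<lambda>_. c"]) (auto simp: S_const)

lemma Proc_const:
  "ok es k \<Longrightarrow> P (set es) \<xi> > 0 \<Longrightarrow> P (set es) \<zeta> > 0 \<Longrightarrow> (\<forall>\<omega>\<in>cylinder (set es) \<xi>. f \<omega> = c)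
   \<Longrightarrow> Proc st k es \<xi> \<zeta> = c * CE f (set es) \<zeta>"
proof (induction k arbitrary: es \<xi> \<zeta>)
  case 0
  then show ?case using CE_const[of "set es" \<xi> f c] by simp
next
  case (Suc k)
  define e where "e = nxt es \<xi>"
  have e: "e \<notin> set es" using nxt_new[OF Suc.prems(1)] e_def by simp
  define p where "p = pr (set es) \<xi> e"
  define q where "q = pr (set es) \<zeta> e"
  have bp: "0 \<le> p" "p \<le> 1" "0 \<le> q" "q \<le> 1" using pr_bnd[OF e] p_def q_def by auto
  have trm: "pp (st (length es)) p q a b * Proc st k (es @ [e]) (\<xi>(e:=a)) (\<zeta>(e:=b))
     = pp (st (length es)) p q a b * (c * CE f (insert e (set es)) (\<zeta>(e:=b)))" for a b
  proof (cases "pp (st (length es)) p q a b = 0")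
    case False
    then have "0 < pp (st (length es)) p q a b" using pp_nonneg[OF bp] by (metis less_eq_real_def)
    note pos = pp_pos[OF bp this]
    have "Proc st k (es @ [e]) (\<xi>(e:=a)) (\<zeta>(e:=b)) = c * CE f (set (es @ [e])) (\<zeta>(e:=b))"
    proof (rule Suc.IH)
      show "ok (es @ [e]) k" using ok_step[OF Suc.prems(1)] e_def by simp
      show "0 < P (set (es @ [e])) (\<xi>(e:=a))" using child_pos'[OF e Suc.prems(2)] pos p_def by simp
      show "0 < P (set (es @ [e])) (\<zeta>(e:=b))" using child_pos'[OF e Suc.prems(3)] pos q_def by simp
      show "\<forall>\<omega>\<in>cylinder (set (es @ [e])) (\<xi>(e:=a)). f \<omega> = c"
        using Suc.prems(4) cyl_child_sub[OF e, of \<xi> a] by auto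
    qed
    then show ?thesis by simp
  qed simp
  have "Proc st (Suc k) es \<xi> \<zeta> = (\<Sum>a\<in>UNIV. \<Sum>b\<in>UNIV. pp (st (length es)) p q a b * (c * CE f (insert e (set es)) (\<zeta>(e:=b))))"
    by (simp only: Proc.simps Let_def e_def[symmetric] p_def[symmetric] q_def[symmetric] trm set_append)
  also have "\<dots> = c * (\<Sum>b\<in>UNIV. (if b then q else 1 - q) * CE f (insert e (set es)) (\<zeta>(e:=b)))"
    unfolding swap_marg pp_marg2 by (simp add: sum_bool algebra_simps)
  also have "\<dots> = c * CE f (set es) \<zeta>" unfolding q_def tower'[OF e] ..
  finally show ?case .
qed

lemma Proc_D:
  assumes "ok es k" "\<forall>i\<ge>length es. \<not> st i" "P (set es) \<xi> > 0" "P (set es) \<zeta>1 > 0" "P (set es) \<zeta>0 > 0"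
    "\<forall>e\<in>set es. \<zeta>0 e \<le> \<zeta>1 e"
  shows "0 \<le> Proc st k es \<xi> \<zeta>1 - Proc st k es \<xi> \<zeta>0 \<and>
         Proc st k es \<xi> \<zeta>1 - Proc st k es \<xi> \<zeta>0 \<le> CE f (set es) \<zeta>1 - CE f (set es) \<zeta>0"
  using assms
proof (induction k arbitrary: es \<xi> \<zeta>1 \<zeta>0)
  case 0
  have m: "CE f (set es) \<zeta>0 \<le> CE f (set es) \<zeta>1" by (rule CE_mono[OF fmono]) (use 0 in auto)
  have b: "0 \<le> CE f (set es) \<xi>" "CE f (set es) \<xi> \<le> 1" by (rule CE_f_bnd)+
  have "0 \<le> CE f (set es) \<xi> * (CE f (set es) \<zeta>1 - CE f (set es) \<zeta>0)" using m b by simp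
  moreover have "CE f (set es) \<xi> * (CE f (set es) \<zeta>1 - CE f (set es) \<zeta>0) \<le> CE f (set es) \<zeta>1 - CE f (set es) \<zeta>0"
    using m b by (simp add: mult_left_le_one_le)
  ultimately show ?case by (simp add: algebra_simps)
next
  case (Suc k)
  define e where "e = nxt es \<xi>"
  have e: "e \<notin> set es" using nxt_new[OF Suc.prems(1)] e_def by simp
  define p where "p = pr (set es) \<xi> e"
  define q1 where "q1 = pr (set es) \<zeta>1 e"
  define q0 where "q0 = pr (set es) \<zeta>0 e"
  have bp: "0 \<le> p" "p \<le> 1" "0 \<le> q0" "q1 \<le> 1" using pr_bnd[OF e] p_def q1_def q0_def by auto
  have qq: "q0 \<le> q1" unfolding q0_def q1_def by (rule pr_mono[OF e]) (use Suc.prems in auto)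
  note bb = bp(1,2,3) qq bp(4)
  have st: "st (length es) = False" using Suc.prems(2) by auto
  define K1 where "K1 a b = Proc st k (es @ [e]) (\<xi>(e:=a)) (\<zeta>1(e:=b))" for a b
  define K0 where "K0 a c = Proc st k (es @ [e]) (\<xi>(e:=a)) (\<zeta>0(e:=c))" for a c
  define E1 where "E1 b = CE f (insert e (set es)) (\<zeta>1(e:=b))" for b
  define E0 where "E0 c = CE f (insert e (set es)) (\<zeta>0(e:=c))" for c
  have P1: "Proc st (Suc k) es \<xi> \<zeta>1 = (\<Sum>a\<in>UNIV. \<Sum>b\<in>UNIV. pp False p q1 a b * K1 a b)"
    by (simp only: Proc.simps Let_def e_def[symmetric] p_def[symmetric] q1_def[symmetric] K1_def st)
  have P0: "Proc st (Suc k) es \<xi> \<zeta>0 = (\<Sum>a\<in>UNIV. \<Sum>c\<in>UNIV. pp False p q0 a c * K0 a c)"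
    by (simp only: Proc.simps Let_def e_def[symmetric] p_def[symmetric] q0_def[symmetric] K0_def st)
  have IHb: "0 \<le> rho p q1 q0 a b c * (K1 a b - K0 a c) \<and>
      rho p q1 q0 a b c * (K1 a b - K0 a c) \<le> rho p q1 q0 a b c * (E1 b - E0 c)" for a b c
  proof (cases "rho p q1 q0 a b c = 0")
    case False
    then have rp: "0 < rho p q1 q0 a b c" using rho_nonneg[OF bb] by (metis less_eq_real_def)
    note pos = rho_pos[OF bb rp]
    have "0 \<le> K1 a b - K0 a c \<and> K1 a b - K0 a c \<le> CE f (set (es @ [e])) (\<zeta>1(e:=b)) - CE f (set (es @ [e])) (\<zeta>0(e:=c))"
      unfolding K1_def K0_def
    proof (rule Suc.IH)
      show "ok (es @ [e]) k" using ok_step[OF Suc.prems(1)] e_def by simp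
      show "\<forall>i\<ge>length (es @ [e]). \<not> st i" using Suc.prems(2) by auto
      show "0 < P (set (es @ [e])) (\<xi>(e:=a))" using child_pos'[OF e Suc.prems(3)] pos p_def by simp
      show "0 < P (set (es @ [e])) (\<zeta>1(e:=b))" using child_pos'[OF e Suc.prems(4)] pos q1_def by simp
      show "0 < P (set (es @ [e])) (\<zeta>0(e:=c))" using child_pos'[OF e Suc.prems(5)] pos q0_def by simp
      show "\<forall>x\<in>set (es @ [e]). (\<zeta>0(e:=c)) x \<le> (\<zeta>1(e:=b)) x" using Suc.prems(6) pos by auto
    qed
    then show ?thesis using rp unfolding E1_def E0_def by (simp add: mult_left_mono)
  qed simp
  have cb: "0 \<le> (\<Sum>a\<in>UNIV. \<Sum>b\<in>UNIV. pp False p q1 a b * K1 a b) - (\<Sum>a\<in>UNIV. \<Sum>c\<in>UNIV. pp False p q0 a c * K0 a c)"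
       "(\<Sum>a\<in>UNIV. \<Sum>b\<in>UNIV. pp False p q1 a b * K1 a b) - (\<Sum>a\<in>UNIV. \<Sum>c\<in>UNIV. pp False p q0 a c * K0 a c)
         \<le> (\<Sum>b\<in>UNIV. (\<Sum>a\<in>UNIV. pp False p q1 a b) * E1 b) - (\<Sum>c\<in>UNIV. (\<Sum>a\<in>UNIV. pp False p q0 a c) * E0 c)"
    by (rule coupling_bound[where rho="rho p q1 q0" and ?E1.0=E1 and ?E0.0=E0 and ?K1.0=K1 and ?K0.0=K0],
        use rho_marg1[OF bb] rho_marg2[OF bb] IHb in auto)+
  have "(\<Sum>b\<in>UNIV. (\<Sum>a\<in>UNIV. pp False p q1 a b) * E1 b) - (\<Sum>c\<in>UNIV. (\<Sum>a\<in>UNIV. pp False p q0 a c) * E0 c)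
     = CE f (set es) \<zeta>1 - CE f (set es) \<zeta>0"
    unfolding pp_marg2 E1_def E0_def q1_def q0_def tower'[OF e] ..
  then show ?case using cb unfolding P1 P0 by linarith
qed

end

context osss begin

definition cst :: "'e list \<Rightarrow> ('e \<Rightarrow> bool) \<Rightarrow> bool" where
  "cst es \<xi> \<longleftrightarrow> (\<forall>\<omega>\<in>cylinder (set es) \<xi>. f \<omega> = f \<xi>)"

fun Bnd :: "nat \<Rightarrow> 'e list \<Rightarrow> ('e \<Rightarrow> bool) \<Rightarrow> ('e \<Rightarrow> bool) \<Rightarrow> real" where
  "Bnd 0 es \<xi> \<zeta> = (if cst es \<xi> then 0 else CC (set es) \<zeta> (nxt es \<xi>))"
| "Bnd (Suc j) es \<xi> \<zeta> = (let e = nxt es \<xi>; p = pr (set es) \<xi> e; q = pr (set es) \<zeta> e in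
     (\<Sum>a\<in>UNIV. \<Sum>b\<in>UNIV. pp True p q a b * Bnd j (es @ [e]) (\<xi>(e:=a)) (\<zeta>(e:=b))))"

definition stp :: "nat \<Rightarrow> nat \<Rightarrow> bool" where "stp m i \<longleftrightarrow> i < m"

lemma Bnd_nonneg: "ok es (Suc j) \<Longrightarrow> 0 \<le> Bnd j es \<xi> \<zeta>"
proof (induction j arbitrary: es \<xi> \<zeta>)
  case 0
  then show ?case using CC_nonneg[OF nxt_new[OF 0]] by simp
next
  case (Suc j)
  define e where "e = nxt es \<xi>"
  have e: "e \<notin> set es" using nxt_new[OF Suc.prems(1)] e_def by simp
  have bp: "0 \<le> pr (set es) \<xi> e" "pr (set es) \<xi> e \<le> 1" "0 \<le> pr (set es) \<zeta> e" "pr (set es) \<zeta> e \<le> 1"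
    using pr_bnd[OF e] by auto
  have "0 \<le> Bnd j (es @ [e]) (\<xi>(e:=a)) (\<zeta>(e:=b))" for a b
    by (rule Suc.IH) (use ok_step[OF Suc.prems(1)] e_def in simp)
  then show ?case using pp_nonneg[OF bp]
    by (simp add: Let_def e_def[symmetric] sum_nonneg)
qed

lemma lam_facts:
  assumes "0 \<le> p" "p \<le> 1" "0 \<le> q" "q \<le> (1::real)"
  shows "0 \<le> min p q - p * q" "min p q - p * q \<le> q * (1 - q)"
    "0 < min p q - p * q \<Longrightarrow> 0 < p \<and> p < 1 \<and> 0 < q \<and> q < 1"
proof -
  have a: "p * q \<le> p" "p * q \<le> q" using assms by (auto simp: mult_left_le mult_left_le_one_le)
  then show "0 \<le> min p q - p * q" by simp
  show "min p q - p * q \<le> q * (1 - q)"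
  proof (cases "p \<le> q")
    case True
    then have "p * (1 - q) \<le> q * (1 - q)" using assms by (intro mult_right_mono) auto
    then show ?thesis using True by (simp add: algebra_simps)
  next
    case False
    then have "q * (1 - p) \<le> q * (1 - q)" using assms by (intro mult_left_mono) auto
    then show ?thesis using False by (simp add: algebra_simps)
  qed
  assume l: "0 < min p q - p * q"
  have "p \<noteq> 0" "q \<noteq> 0" using l by auto
  moreover have "p \<noteq> 1" using l assms by (auto simp: min_def)
  moreover have "q \<noteq> 1" using l assms by (auto simp: min_def)
  ultimately show "0 < p \<and> p < 1 \<and> 0 < q \<and> q < 1" using assms by auto
qed

lemma switch:
  assumes ok: "ok es (Suc k)" and len: "length es = m"
  shows "Proc (stp m) (Suc k) es \<xi> \<zeta> - Proc (stp (Suc m)) (Suc k) es \<xi> \<zeta> \<le> Bnd 0 es \<xi> \<zeta>"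
proof -
  define e where "e = nxt es \<xi>"
  have e: "e \<notin> set es" using nxt_new[OF ok] e_def by simp
  define p where "p = pr (set es) \<xi> e"
  define q where "q = pr (set es) \<zeta> e"
  have bp: "0 \<le> p" "p \<le> 1" "0 \<le> q" "q \<le> 1" using pr_bnd[OF e] p_def q_def by auto
  define lam where "lam = min p q - p * q"
  note lf = lam_facts[OF bp, folded lam_def]
  define K where "K a b = Proc (stp m) k (es @ [e]) (\<xi>(e:=a)) (\<zeta>(e:=b))" for a b
  have okc: "ok (es @ [e]) k" using ok_step[OF ok] e_def by simp
  have cong: "Proc (stp (Suc m)) k (es @ [e]) (\<xi>(e:=a)) (\<zeta>(e:=b)) = K a b" for a b
    unfolding K_def by (rule Proc_cong) (use len in \<open>auto simp: stp_def\<close>)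
  have P_m: "Proc (stp m) (Suc k) es \<xi> \<zeta> = (\<Sum>a\<in>UNIV. \<Sum>b\<in>UNIV. pp False p q a b * K a b)"
  proof -
    have "stp m (length es) = False" using len by (simp add: stp_def)
    then show ?thesis
      by (simp only: Proc.simps Let_def e_def[symmetric] p_def[symmetric] q_def[symmetric] K_def)
  qed
  have P_m1: "Proc (stp (Suc m)) (Suc k) es \<xi> \<zeta> = (\<Sum>a\<in>UNIV. \<Sum>b\<in>UNIV. pp True p q a b * K a b)"
  proof -
    have "stp (Suc m) (length es) = True" using len by (simp add: stp_def)
    then show ?thesis
      by (simp only: Proc.simps Let_def e_def[symmetric] p_def[symmetric] q_def[symmetric] cong)
  qed
  have d: "pp False p q a b = pp True p q a b + (if a = b then 1 else -1) * lam" for a b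
    using pp_diff[of p q a b] unfolding lam_def by simp
  have diff: "Proc (stp m) (Suc k) es \<xi> \<zeta> - Proc (stp (Suc m)) (Suc k) es \<xi> \<zeta>
     = lam * ((K True True - K True False) - (K False True - K False False))"
    unfolding P_m P_m1 sum_bool d by (simp add: algebra_simps)
  have B0: "Bnd 0 es \<xi> \<zeta> = (if cst es \<xi> then 0 else CC (set es) \<zeta> e)" by (simp add: e_def)
  have Bnn: "0 \<le> Bnd 0 es \<xi> \<zeta>" by (rule Bnd_nonneg) (use ok in \<open>auto simp: ok_def\<close>)
  show ?thesis
  proof (cases "lam > 0")
    case False
    then have "lam = 0" using lf by simp
    then show ?thesis using diff Bnn by simp
  next
    case True
    then have pq: "0 < p" "p < 1" "0 < q" "q < 1" using lf by auto
    have Px: "P (set es) \<xi> > 0" using pos_of_pr pq p_def by simp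
    have Pz: "P (set es) \<zeta> > 0" using pos_of_pr pq q_def by simp
    have cx: "0 < P (set (es @ [e])) (\<xi>(e:=a))" for a using child_pos'[OF e Px] pq p_def by simp
    have cz: "0 < P (set (es @ [e])) (\<zeta>(e:=b))" for b using child_pos'[OF e Pz] pq q_def by simp
    define E1 where "E1 = CE f (set (es @ [e])) (\<zeta>(e:=True))"
    define E0 where "E0 = CE f (set (es @ [e])) (\<zeta>(e:=False))"
    show ?thesis
    proof (cases "cst es \<xi>")
      case True
      have "K a b = f \<xi> * CE f (set (es @ [e])) (\<zeta>(e:=b))" for a b
        unfolding K_def
      proof (rule Proc_const[OF okc cx cz])
        show "\<forall>\<omega>\<in>cylinder (set (es @ [e])) (\<xi>(e:=a)). f \<omega> = f \<xi>"
          using True cyl_child_sub[OF e, of \<xi> a] unfolding cst_def by auto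
      qed
      then show ?thesis unfolding diff B0 using True by simp
    next
      case False
      have D: "0 \<le> K a True - K a False \<and> K a True - K a False \<le> E1 - E0" for a
        unfolding K_def E1_def E0_def
        by (rule Proc_D[OF okc _ cx cz cz]) (auto simp: stp_def len)
      have "lam * ((K True True - K True False) - (K False True - K False False)) \<le> lam * (E1 - E0)"
        using D[of True] D[of False] True by (intro mult_left_mono) auto
      also have "\<dots> \<le> q * (1 - q) * (E1 - E0)"
        using lf D[of True] by (intro mult_right_mono) auto
      also have "\<dots> = CC (set es) \<zeta> e" unfolding CC_formula[OF e] q_def E1_def E0_def by simp
      finally show ?thesis unfolding diff B0 using False by simp
    qed
  qed
qed

lemma main_term:
  assumes "ok es k" "length es + k = CARD('e)" "length es + j = m" "m < CARD('e)"
  shows "Proc (stp m) k es \<xi> \<zeta> - Proc (stp (Suc m)) k es \<xi> \<zeta> \<le> Bnd j es \<xi> \<zeta>"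
  using assms
proof (induction j arbitrary: es k \<xi> \<zeta>)
  case 0
  then obtain k' where k: "k = Suc k'" by (cases k) auto
  show ?case unfolding k by (rule switch) (use 0 k in auto)
next
  case (Suc j)
  then obtain k' where k: "k = Suc k'" by (cases k) auto
  have ok: "ok es (Suc k')" using Suc.prems k by simp
  define e where "e = nxt es \<xi>"
  have e: "e \<notin> set es" using nxt_new[OF ok] e_def by simp
  define p where "p = pr (set es) \<xi> e"
  define q where "q = pr (set es) \<zeta> e"
  have bp: "0 \<le> p" "p \<le> 1" "0 \<le> q" "q \<le> 1" using pr_bnd[OF e] p_def q_def by auto
  have s1: "stp m (length es) = True" "stp (Suc m) (length es) = True" using Suc.prems by (auto simp: stp_def)
  have IH: "Proc (stp m) k' (es @ [e]) (\<xi>(e:=a)) (\<zeta>(e:=b)) - Proc (stp (Suc m)) k' (es @ [e]) (\<xi>(e:=a)) (\<zeta>(e:=b))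
     \<le> Bnd j (es @ [e]) (\<xi>(e:=a)) (\<zeta>(e:=b))" for a b
    by (rule Suc.IH) (use Suc.prems ok_step[OF ok] e_def k in auto)
  have "Proc (stp m) k es \<xi> \<zeta> - Proc (stp (Suc m)) k es \<xi> \<zeta> =
     (\<Sum>a\<in>UNIV. \<Sum>b\<in>UNIV. pp True p q a b * (Proc (stp m) k' (es @ [e]) (\<xi>(e:=a)) (\<zeta>(e:=b)) - Proc (stp (Suc m)) k' (es @ [e]) (\<xi>(e:=a)) (\<zeta>(e:=b))))"
    unfolding k by (simp only: Proc.simps Let_def e_def[symmetric] p_def[symmetric] q_def[symmetric] s1)
      (simp add: sum_bool algebra_simps)
  also have "\<dots> \<le> (\<Sum>a\<in>UNIV. \<Sum>b\<in>UNIV. pp True p q a b * Bnd j (es @ [e]) (\<xi>(e:=a)) (\<zeta>(e:=b)))"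
    by (intro sum_mono mult_left_mono IH pp_nonneg bp)
  also have "\<dots> = Bnd (Suc j) es \<xi> \<zeta>"
    by (simp only: Bnd.simps Let_def e_def[symmetric] p_def[symmetric] q_def[symmetric])
  finally show ?case .
qed

end

context osss begin

fun Y :: "nat \<Rightarrow> 'e list \<Rightarrow> ('e \<Rightarrow> bool) \<Rightarrow> 'e set \<Rightarrow> ('e \<Rightarrow> bool) \<Rightarrow> real" where
  "Y 0 es \<xi> G \<zeta> = (if cst es \<xi> then 0 else CC G \<zeta> (nxt es \<xi>))"
| "Y (Suc j) es \<xi> G \<zeta> = (let e = nxt es \<xi>; p = pr (set es) \<xi> e in
     (\<Sum>a\<in>UNIV. (if a then p else 1 - p) * Y j (es @ [e]) (\<xi>(e:=a)) G \<zeta>))"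

lemma Y_step:
  assumes "ok es (Suc j)" "r \<notin> G" "insert r G \<subseteq> set es"
  shows "pr G \<zeta> r * Y j es \<xi> (insert r G) (\<zeta>(r:=True)) + (1 - pr G \<zeta> r) * Y j es \<xi> (insert r G) (\<zeta>(r:=False))
         \<le> Y j es \<xi> G \<zeta>"
  using assms
proof (induction j arbitrary: es \<xi>)
  case 0
  have "nxt es \<xi> \<notin> insert r G" using nxt_new[OF "0.prems"(1)] "0.prems"(3) by auto
  note c = CC_step[OF "0.prems"(2) this, of \<zeta>]
  show ?case
  proof (cases "cst es \<xi>")
    case True
    then show ?thesis by simp
  next
    case False
    then show ?thesis using c by (simp only: Y.simps if_False)
  qed
next
  case (Suc j)
  define e where "e = nxt es \<xi>"
  have e: "e \<notin> set es" using nxt_new[OF Suc.prems(1)] e_def by simp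
  define p where "p = pr (set es) \<xi> e"
  define u where "u = pr G \<zeta> r"
  define zt where "zt = \<zeta>(r:=True)"
  define zf where "zf = \<zeta>(r:=False)"
  have bp: "0 \<le> p" "p \<le> 1" using pr_bnd[OF e] p_def by auto
  have IH: "u * Y j (es @ [e]) (\<xi>(e:=a)) (insert r G) zt + (1 - u) * Y j (es @ [e]) (\<xi>(e:=a)) (insert r G) zf
       \<le> Y j (es @ [e]) (\<xi>(e:=a)) G \<zeta>" for a
    unfolding u_def zt_def zf_def by (rule Suc.IH) (use Suc.prems ok_step[OF Suc.prems(1)] e_def in auto)
  have "p * (u * Y j (es @ [e]) (\<xi>(e:=True)) (insert r G) zt + (1 - u) * Y j (es @ [e]) (\<xi>(e:=True)) (insert r G) zf)
     \<le> p * Y j (es @ [e]) (\<xi>(e:=True)) G \<zeta>" using IH[of True] bp by (intro mult_left_mono) auto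
  moreover have "(1 - p) * (u * Y j (es @ [e]) (\<xi>(e:=False)) (insert r G) zt + (1 - u) * Y j (es @ [e]) (\<xi>(e:=False)) (insert r G) zf)
     \<le> (1 - p) * Y j (es @ [e]) (\<xi>(e:=False)) G \<zeta>" using IH[of False] bp by (intro mult_left_mono) auto
  ultimately show ?case unfolding u_def[symmetric] zt_def[symmetric] zf_def[symmetric]
    by (simp add: Let_def e_def[symmetric] p_def[symmetric] sum_bool algebra_simps)
qed

lemma Bnd_le_Y: "ok es (Suc j) \<Longrightarrow> Bnd j es \<xi> \<zeta> \<le> Y j es \<xi> (set es) \<zeta>"
proof (induction j arbitrary: es \<xi> \<zeta>)
  case 0
  then show ?case by simp
next
  case (Suc j)
  define e where "e = nxt es \<xi>"
  have e: "e \<notin> set es" using nxt_new[OF Suc.prems(1)] e_def by simp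
  define p where "p = pr (set es) \<xi> e"
  define q where "q = pr (set es) \<zeta> e"
  have bp: "0 \<le> p" "p \<le> 1" "0 \<le> q" "q \<le> 1" using pr_bnd[OF e] p_def q_def by auto
  have okc: "ok (es @ [e]) (Suc j)" using ok_step[OF Suc.prems(1)] e_def by simp
  have IH: "Bnd j (es @ [e]) (\<xi>(e:=a)) (\<zeta>(e:=b)) \<le> Y j (es @ [e]) (\<xi>(e:=a)) (insert e (set es)) (\<zeta>(e:=b))" for a b
    using Suc.IH[OF okc] by simp
  have ST: "q * Y j (es @ [e]) (\<xi>(e:=a)) (insert e (set es)) (\<zeta>(e:=True)) + (1 - q) * Y j (es @ [e]) (\<xi>(e:=a)) (insert e (set es)) (\<zeta>(e:=False))
     \<le> Y j (es @ [e]) (\<xi>(e:=a)) (set es) \<zeta>" for a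
    unfolding q_def by (rule Y_step[OF okc e]) auto
  have "Bnd (Suc j) es \<xi> \<zeta> = (\<Sum>a\<in>UNIV. \<Sum>b\<in>UNIV. pp True p q a b * Bnd j (es @ [e]) (\<xi>(e:=a)) (\<zeta>(e:=b)))"
    by (simp only: Bnd.simps Let_def e_def[symmetric] p_def[symmetric] q_def[symmetric])
  also have "\<dots> \<le> (\<Sum>a\<in>UNIV. \<Sum>b\<in>UNIV. pp True p q a b * Y j (es @ [e]) (\<xi>(e:=a)) (insert e (set es)) (\<zeta>(e:=b)))"
    by (intro sum_mono mult_left_mono IH pp_nonneg bp)
  also have "\<dots> = (\<Sum>a\<in>UNIV. (if a then p else 1 - p) * (q * Y j (es @ [e]) (\<xi>(e:=a)) (insert e (set es)) (\<zeta>(e:=True))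
        + (1 - q) * Y j (es @ [e]) (\<xi>(e:=a)) (insert e (set es)) (\<zeta>(e:=False))))"
    by (simp add: sum_bool pp_True algebra_simps)
  also have "\<dots> \<le> (\<Sum>a\<in>UNIV. (if a then p else 1 - p) * Y j (es @ [e]) (\<xi>(e:=a)) (set es) \<zeta>)"
    using bp by (intro sum_mono mult_left_mono ST) auto
  also have "\<dots> = Y (Suc j) es \<xi> (set es) \<zeta>"
    by (simp only: Y.simps Let_def e_def[symmetric] p_def[symmetric])
  finally show ?case .
qed

end

context osss begin

fun ext :: "'e list \<Rightarrow> ('e \<Rightarrow> bool) \<Rightarrow> nat \<Rightarrow> 'e list" where
  "ext es \<omega> 0 = es"
| "ext es \<omega> (Suc j) = ext (es @ [nxt es \<omega>]) \<omega> j"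

definition Hb :: "('e \<Rightarrow> bool) \<Rightarrow> 'e list \<Rightarrow> ('e \<Rightarrow> bool) \<Rightarrow> real" where
  "Hb \<zeta> es \<omega> = (if cst es \<omega> then 0 else CC {} \<zeta> (nxt es \<omega>))"

lemma cyl_same: "\<omega> \<in> cylinder F \<xi> \<Longrightarrow> cylinder F \<omega> = cylinder F \<xi>"
  unfolding cylinder_def by auto

lemma nxt_cyl: "\<omega> \<in> cylinder (set es) \<xi> \<Longrightarrow> nxt es \<omega> = nxt es \<xi>"
proof -
  assume a: "\<omega> \<in> cylinder (set es) \<xi>"
  have m: "map (\<lambda>x. (x, \<omega> x)) es = map (\<lambda>x. (x, \<xi> x)) es"
    using a by (intro map_cong refl) (auto simp: cylinder_def)
  show ?thesis by (simp only: nxt_def m)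
qed

lemma self_cyl: "\<xi> \<in> cylinder F \<xi>"
  unfolding cylinder_def by auto

lemma cst_cyl: "\<omega> \<in> cylinder (set es) \<xi> \<Longrightarrow> cst es \<omega> = cst es \<xi>"
  unfolding cst_def using cyl_same[of \<omega> "set es" \<xi>] self_cyl[of \<xi> "set es"] by metis

lemma setsnoc: "set (es @ [e]) = insert e (set es)" by simp

lemma Y_path: "ok es j \<Longrightarrow> S (set es) \<xi> (\<lambda>\<omega>. Hb \<zeta> (ext es \<omega> j) \<omega>) = P (set es) \<xi> * Y j es \<xi> {} \<zeta>"
proof (induction j arbitrary: es \<xi>)
  case 0
  have "S (set es) \<xi> (\<lambda>\<omega>. Hb \<zeta> (ext es \<omega> 0) \<omega>) = S (set es) \<xi> (\<lambda>_. Y 0 es \<xi> {} \<zeta>)"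
    by (rule S_cong) (simp add: Hb_def nxt_cyl cst_cyl)
  then show ?case by (simp add: S_const)
next
  case (Suc j)
  define e where "e = nxt es \<xi>"
  have e: "e \<notin> set es" using nxt_new[OF Suc.prems(1)] e_def by simp
  define p where "p = pr (set es) \<xi> e"
  have okc: "ok (es @ [e]) j" using ok_step[OF Suc.prems(1)] e_def by simp
  define g where "g = (\<lambda>\<omega>. Hb \<zeta> (ext (es @ [e]) \<omega> j) \<omega>)"
  have "S (set es) \<xi> (\<lambda>\<omega>. Hb \<zeta> (ext es \<omega> (Suc j)) \<omega>) = S (set es) \<xi> g"
    unfolding g_def by (rule S_cong) (simp add: nxt_cyl e_def)
  also have "\<dots> = S (insert e (set es)) (\<xi>(e:=True)) g + S (insert e (set es)) (\<xi>(e:=False)) g"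
    by (rule S_split[OF e])
  also have "\<dots> = P (insert e (set es)) (\<xi>(e:=True)) * Y j (es @ [e]) (\<xi>(e:=True)) {} \<zeta>
      + P (insert e (set es)) (\<xi>(e:=False)) * Y j (es @ [e]) (\<xi>(e:=False)) {} \<zeta>"
    using Suc.IH[OF okc, of "\<xi>(e:=True)"] Suc.IH[OF okc, of "\<xi>(e:=False)"] unfolding g_def
    by (simp only: setsnoc)
  also have "\<dots> = P (set es) \<xi> * Y (Suc j) es \<xi> {} \<zeta>"
    unfolding P_children[OF e] by (simp add: Let_def e_def[symmetric] p_def[symmetric] sum_bool algebra_simps)
  finally show ?case .
qed

lemma dt_Suc: "dt_order \<phi> \<omega> (Suc t) = dt_order \<phi> \<omega> t @ [nxt (dt_order \<phi> \<omega> t) \<omega>]"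
  by (simp add: nxt_def Let_def)

lemma ext_dt: "ext (dt_order \<phi> \<omega> t) \<omega> j = dt_order \<phi> \<omega> (t + j)"
proof (induction j arbitrary: t)
  case (Suc j)
  have "ext (dt_order \<phi> \<omega> t) \<omega> (Suc j) = ext (dt_order \<phi> \<omega> (Suc t)) \<omega> j"
    by (simp only: ext.simps dt_Suc)
  then show ?case using Suc.IH[of "Suc t"] by simp
qed simp

lemma dt_len: "length (dt_order \<phi> \<omega> t) = t"
  by (induction t) (simp_all add: Let_def)

lemma dt_app: "\<exists>ys. dt_order \<phi> \<omega> (t + d) = dt_order \<phi> \<omega> t @ ys"
  by (induction d) (auto simp: Let_def)

lemma dt_nth: "i < t \<Longrightarrow> t \<le> t' \<Longrightarrow> dt_order \<phi> \<omega> t ! i = dt_order \<phi> \<omega> t' ! i"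
  using dt_app[of \<omega> t "t' - t"] dt_len[of \<omega> t] by (auto simp: nth_append)

lemma dt_set_mono: "t \<le> t' \<Longrightarrow> set (dt_order \<phi> \<omega> t) \<subseteq> set (dt_order \<phi> \<omega> t')"
  using dt_app[of \<omega> t "t' - t"] by auto

lemma dt_ok: "t \<le> CARD('e) \<Longrightarrow> ok (dt_order \<phi> \<omega> t) (CARD('e) - t)"
proof (induction t)
  case 0
  then show ?case by (simp add: ok_def)
next
  case (Suc t)
  then have o: "ok (dt_order \<phi> \<omega> t) (Suc (CARD('e) - Suc t))" by (simp add: Suc_diff_Suc)
  have "dt_order \<phi> \<omega> (Suc t) = dt_order \<phi> \<omega> t @ [nxt (dt_order \<phi> \<omega> t) \<omega>]" by (simp add: nxt_def Let_def)
  then show ?case using ok_step[OF o] by simp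
qed

lemma dt_full: "set (dt_order \<phi> \<omega> CARD('e)) = UNIV"
  using cyl_full[OF dt_ok[of "CARD('e)" \<omega>]] dt_len by simp

end

context osss begin

lemma E_sum: "measure_pmf.expectation \<mu> g = (\<Sum>\<omega>\<in>UNIV. g \<omega> * pmf \<mu> \<omega>)"
  by (rule integral_measure_pmf_real) auto

lemma cyl_empty: "cylinder {} \<xi> = UNIV"
  unfolding cylinder_def by auto

lemma pmf_sum1: "(\<Sum>\<omega>\<in>UNIV. pmf \<mu> \<omega>) = 1"
  by (rule sum_pmf_eq_1) auto

lemma P_empty: "P {} \<xi> = 1"
  unfolding P_def S_def cyl_empty using pmf_sum1 by simp

lemma S_empty: "S {} \<xi> g = (\<Sum>\<omega>\<in>UNIV. g \<omega> * pmf \<mu> \<omega>)"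
  unfolding S_def cyl_empty by (simp add: mult.commute)

lemma CE_empty: "CE g {} \<xi> = measure_pmf.expectation \<mu> g"
  unfolding CE_def P_empty S_empty E_sum by simp

lemma cov_eq: "covariance_pmf \<mu> f (\<lambda>\<omega>. if \<omega> e then 1 else 0) = CC {} \<xi> e"
proof -
  define a where "a = measure_pmf.expectation \<mu> f"
  define b where "b = measure_pmf.expectation \<mu> (ind e)"
  have ie: "(\<lambda>\<omega>. if \<omega> e then 1 else 0 :: real) = ind e" by (rule ext) (simp add: ind_def)
  have "(\<Sum>\<omega>\<in>UNIV. (f \<omega> - a) * (ind e \<omega> - b) * pmf \<mu> \<omega>)
      = (\<Sum>\<omega>\<in>UNIV. f \<omega> * ind e \<omega> * pmf \<mu> \<omega>) - a * (\<Sum>\<omega>\<in>UNIV. ind e \<omega> * pmf \<mu> \<omega>)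
        - b * (\<Sum>\<omega>\<in>UNIV. f \<omega> * pmf \<mu> \<omega>) + a * b * (\<Sum>\<omega>\<in>UNIV. pmf \<mu> \<omega>)"
    by (simp add: sum_subtractf sum.distrib sum_distrib_left algebra_simps)
  also have "\<dots> = (\<Sum>\<omega>\<in>UNIV. f \<omega> * ind e \<omega> * pmf \<mu> \<omega>) - a * b"
    unfolding pmf_sum1 a_def b_def E_sum by simp
  finally show ?thesis
    unfolding covariance_pmf_def CC_def CE_empty ie a_def[symmetric] b_def[symmetric]
    by (simp add: E_sum)
qed

lemma var_eq: "measure_pmf.variance \<mu> f = CE (\<lambda>\<omega>. f \<omega> * f \<omega>) {} \<xi> - CE f {} \<xi> * CE f {} \<xi>"
proof -
  define a where "a = measure_pmf.expectation \<mu> f"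
  have "(\<Sum>\<omega>\<in>UNIV. (f \<omega> - a)\<^sup>2 * pmf \<mu> \<omega>)
      = (\<Sum>\<omega>\<in>UNIV. f \<omega> * f \<omega> * pmf \<mu> \<omega>) - 2 * a * (\<Sum>\<omega>\<in>UNIV. f \<omega> * pmf \<mu> \<omega>)
        + a * a * (\<Sum>\<omega>\<in>UNIV. pmf \<mu> \<omega>)"
    by (simp add: sum_subtractf sum.distrib sum_distrib_left algebra_simps power2_eq_square)
  also have "\<dots> = (\<Sum>\<omega>\<in>UNIV. f \<omega> * f \<omega> * pmf \<mu> \<omega>) - a * a"
    unfolding pmf_sum1 a_def E_sum by simp
  finally show ?thesis unfolding CE_empty a_def[symmetric] by (simp add: E_sum)
qed

definition Q :: "('e \<Rightarrow> bool) \<Rightarrow> nat \<Rightarrow> bool" where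
  "Q \<omega> t \<longleftrightarrow> t \<ge> 1 \<and> (\<forall>\<omega>'. (\<forall>e\<in>set (dt_order \<phi> \<omega> t). \<omega>' e = \<omega> e) \<longrightarrow> f \<omega>' = f \<omega>)"

lemma tau_Q: "tau f \<phi> \<omega> = (LEAST t. Q \<omega> t)"
  unfolding tau_def Q_def ..

lemma Q_n: "Q \<omega> CARD('e)"
proof -
  have "CARD('e) \<ge> 1" using finite_UNIV_card_ge_0[of] by (simp add: Suc_le_eq)
  moreover have "\<omega>' = \<omega>" if "\<forall>e\<in>set (dt_order \<phi> \<omega> CARD('e)). \<omega>' e = \<omega> e" for \<omega>'
    using that dt_full by auto
  ultimately show ?thesis unfolding Q_def by auto
qed

lemma tau_le: "tau f \<phi> \<omega> \<le> CARD('e)"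
  unfolding tau_Q by (rule Least_le) (rule Q_n)

lemma tau_holds: "Q \<omega> (tau f \<phi> \<omega>)"
  unfolding tau_Q by (rule LeastI) (rule Q_n)

lemma not_cst_lt_tau: "\<not> cst (dt_order \<phi> \<omega> t) \<omega> \<Longrightarrow> t < tau f \<phi> \<omega>"
proof (rule ccontr)
  assume nc: "\<not> cst (dt_order \<phi> \<omega> t) \<omega>" and "\<not> t < tau f \<phi> \<omega>"
  then have le: "tau f \<phi> \<omega> \<le> t" by simp
  have q: "Q \<omega> (tau f \<phi> \<omega>)" by (rule tau_holds)
  have "cst (dt_order \<phi> \<omega> t) \<omega>"
    unfolding cst_def
  proof
    fix \<omega>' assume "\<omega>' \<in> cylinder (set (dt_order \<phi> \<omega> t)) \<omega>"
    then have "\<forall>e\<in>set (dt_order \<phi> \<omega> (tau f \<phi> \<omega>)). \<omega>' e = \<omega> e"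
      using dt_set_mono[OF le, of \<omega>] unfolding cylinder_def by auto
    then show "f \<omega>' = f \<omega>" using q unfolding Q_def by blast
  qed
  then show False using nc by simp
qed

definition R :: "'e \<Rightarrow> ('e \<Rightarrow> bool) set" where
  "R e = {\<omega>. \<exists>t. 1 \<le> t \<and> t \<le> tau f \<phi> \<omega> \<and> dt_order \<phi> \<omega> t ! (t - 1) = e}"

lemma sum_filter_lt: "m \<le> (n::nat) \<Longrightarrow> (\<Sum>t<n. if t < m then g t else 0) = (\<Sum>t<m. (g t :: real))"
proof -
  assume "m \<le> n"
  then have "{x \<in> {..<n}. x < m} = {..<m}" by auto
  then show ?thesis using sum.inter_filter[of "{..<n}" g "\<lambda>t. t < m"] by simp
qed

lemma per_omega:
  "(\<Sum>t<CARD('e). Hb \<xi> (dt_order \<phi> \<omega> t) \<omega>) \<le> (\<Sum>e\<in>UNIV. (if \<omega> \<in> R e then 1 else 0) * CC {} \<xi> e)"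
proof -
  define n where "n = CARD('e)"
  define D where "D = dt_order \<phi> \<omega> n"
  define m where "m = tau f \<phi> \<omega>"
  have mn: "m \<le> n" unfolding m_def n_def by (rule tau_le)
  have lenD: "length D = n" unfolding D_def by (rule dt_len)
  have distD: "distinct D" using dt_ok[of n \<omega>] unfolding D_def n_def ok_def by simp
  have nx: "nxt (dt_order \<phi> \<omega> t) \<omega> = D ! t" if "t < n" for t
  proof -
    have "dt_order \<phi> \<omega> (Suc t) ! t = nxt (dt_order \<phi> \<omega> t) \<omega>"
      unfolding dt_Suc by (simp add: nth_append dt_len)
    moreover have "dt_order \<phi> \<omega> (Suc t) ! t = D ! t" unfolding D_def
      by (rule dt_nth) (use that in auto)
    ultimately show ?thesis by simp
  qed
  have h: "Hb \<xi> (dt_order \<phi> \<omega> t) \<omega> \<le> (if t < m then CC {} \<xi> (D ! t) else 0)" if "t < n" for t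
  proof (cases "cst (dt_order \<phi> \<omega> t) \<omega>")
    case True
    then show ?thesis using CC_nonneg[of "D ! t" "{}" \<xi>] by (simp add: Hb_def)
  next
    case False
    then have "t < m" unfolding m_def by (rule not_cst_lt_tau)
    then show ?thesis using False nx[OF that] by (simp add: Hb_def)
  qed
  have "(\<Sum>t<n. Hb \<xi> (dt_order \<phi> \<omega> t) \<omega>) \<le> (\<Sum>t<n. if t < m then CC {} \<xi> (D ! t) else 0)"
    by (rule sum_mono) (use h in auto)
  also have "\<dots> = (\<Sum>t<m. CC {} \<xi> (D ! t))" by (rule sum_filter_lt[OF mn])
  also have "\<dots> = (\<Sum>e\<in>(\<lambda>t. D ! t) ` {..<m}. CC {} \<xi> e)"
  proof (rule sum.reindex[symmetric, unfolded comp_def])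
    show "inj_on (\<lambda>t. D ! t) {..<m}" using distD lenD mn
      by (auto simp: inj_on_def nth_eq_iff_index_eq)
  qed
  also have "\<dots> = (\<Sum>e\<in>UNIV. if e \<in> (\<lambda>t. D ! t) ` {..<m} then CC {} \<xi> e else 0)"
    using sum.inter_filter[of UNIV "CC {} \<xi>" "\<lambda>e. e \<in> (\<lambda>t. D ! t) ` {..<m}"] by simp
  also have "\<dots> = (\<Sum>e\<in>UNIV. (if \<omega> \<in> R e then 1 else 0) * CC {} \<xi> e)"
  proof (rule sum.cong[OF refl])
    fix e
    have "e \<in> (\<lambda>t. D ! t) ` {..<m} \<longleftrightarrow> \<omega> \<in> R e"
    proof
      assume "e \<in> (\<lambda>t. D ! t) ` {..<m}"
      then obtain t where t: "t < m" "e = D ! t" by auto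
      have "dt_order \<phi> \<omega> (Suc t) ! t = D ! t" unfolding D_def
        by (rule dt_nth) (use t mn in auto)
      then show "\<omega> \<in> R e" unfolding R_def using t m_def
        by (intro CollectI exI[of _ "Suc t"]) auto
    next
      assume "\<omega> \<in> R e"
      then obtain t where t: "1 \<le> t" "t \<le> m" "dt_order \<phi> \<omega> t ! (t - 1) = e"
        unfolding R_def m_def by auto
      have "dt_order \<phi> \<omega> t ! (t - 1) = D ! (t - 1)" unfolding D_def
        by (rule dt_nth) (use t mn in auto)
      then show "e \<in> (\<lambda>t. D ! t) ` {..<m}" using t by (intro image_eqI[of _ _ "t - 1"]) auto
    qed
    then show "(if e \<in> (\<lambda>t. D ! t) ` {..<m} then CC {} \<xi> e else 0) = (if \<omega> \<in> R e then 1 else 0) * CC {} \<xi> e"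
      by simp
  qed
  finally show ?thesis unfolding n_def .
qed

lemma reveal_eq: "revealment \<mu> f \<phi> e = (\<Sum>\<omega>\<in>UNIV. (if \<omega> \<in> R e then 1 else 0) * pmf \<mu> \<omega>)"
proof -
  have "revealment \<mu> f \<phi> e = sum (pmf \<mu>) (R e)"
    unfolding revealment_def R_def[symmetric] by (simp add: measure_measure_pmf_finite)
  also have "\<dots> = (\<Sum>\<omega>\<in>UNIV. if \<omega> \<in> R e then pmf \<mu> \<omega> else 0)"
    using sum.inter_filter[of UNIV "pmf \<mu>" "\<lambda>\<omega>. \<omega> \<in> R e"] by simp
  also have "\<dots> = (\<Sum>\<omega>\<in>UNIV. (if \<omega> \<in> R e then 1 else 0) * pmf \<mu> \<omega>)"
    by (rule sum.cong) auto
  finally show ?thesis .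
qed

lemma osss_main:
  "measure_pmf.variance \<mu> f
     \<le> (\<Sum>e\<in>UNIV. revealment \<mu> f \<phi> e * covariance_pmf \<mu> f (\<lambda>\<omega>. if \<omega> e then 1 else 0))"
proof -
  define n where "n = CARD('e)"
  define \<xi>0 where "\<xi>0 = (\<lambda>_::'e. False)"
  define c where "c t = Proc (stp t) n [] \<xi>0 \<xi>0" for t
  have ok0: "ok [] n" unfolding ok_def n_def by simp
  have c0: "c 0 = CE (\<lambda>\<omega>. f \<omega> * f \<omega>) {} \<xi>0"
    unfolding c_def using Proc_diag[OF ok0, of "stp 0" \<xi>0] by (simp add: stp_def n_def)
  have cn: "c n = CE f {} \<xi>0 * CE f {} \<xi>0"
    unfolding c_def using Proc_indep[OF ok0, of "stp n" \<xi>0 \<xi>0] by (simp add: stp_def)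
  have Yp: "Y t [] \<xi>0 {} \<xi>0 = (\<Sum>\<omega>\<in>UNIV. Hb \<xi>0 (dt_order \<phi> \<omega> t) \<omega> * pmf \<mu> \<omega>)" if "t \<le> n" for t
  proof -
    have "ok [] t" using that unfolding ok_def n_def by simp
    from Y_path[OF this, of \<xi>0 \<xi>0] have "S {} \<xi>0 (\<lambda>\<omega>. Hb \<xi>0 (ext [] \<omega> t) \<omega>) = Y t [] \<xi>0 {} \<xi>0"
      by (simp add: P_empty)
    moreover have "ext [] \<omega> t = dt_order \<phi> \<omega> t" for \<omega> using ext_dt[of \<omega> 0 t] by simp
    ultimately show ?thesis by (simp add: S_empty)
  qed
  have step: "c t - c (Suc t) \<le> (\<Sum>\<omega>\<in>UNIV. Hb \<xi>0 (dt_order \<phi> \<omega> t) \<omega> * pmf \<mu> \<omega>)" if "t < n" for t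
  proof -
    have "c t - c (Suc t) \<le> Bnd t [] \<xi>0 \<xi>0"
      unfolding c_def by (rule main_term) (use ok0 that n_def in auto)
    also have "\<dots> \<le> Y t [] \<xi>0 (set []) \<xi>0"
      by (rule Bnd_le_Y) (use that in \<open>simp add: ok_def n_def\<close>)
    also have "\<dots> = (\<Sum>\<omega>\<in>UNIV. Hb \<xi>0 (dt_order \<phi> \<omega> t) \<omega> * pmf \<mu> \<omega>)" using Yp that by simp
    finally show ?thesis .
  qed
  have "measure_pmf.variance \<mu> f = c 0 - c n" unfolding c0 cn by (rule var_eq)
  also have "\<dots> = (\<Sum>t<n. c t - c (Suc t))" by (rule sum_lessThan_telescope'[symmetric])
  also have "\<dots> \<le> (\<Sum>t<n. \<Sum>\<omega>\<in>UNIV. Hb \<xi>0 (dt_order \<phi> \<omega> t) \<omega> * pmf \<mu> \<omega>)"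
    by (rule sum_mono) (use step in auto)
  also have "\<dots> = (\<Sum>\<omega>\<in>UNIV. pmf \<mu> \<omega> * (\<Sum>t<n. Hb \<xi>0 (dt_order \<phi> \<omega> t) \<omega>))"
    by (subst sum.swap) (simp add: sum_distrib_left mult.commute)
  also have "\<dots> \<le> (\<Sum>\<omega>\<in>UNIV. pmf \<mu> \<omega> * (\<Sum>e\<in>UNIV. (if \<omega> \<in> R e then 1 else 0) * CC {} \<xi>0 e))"
    by (rule sum_mono, rule mult_left_mono) (use per_omega n_def in auto)
  also have "\<dots> = (\<Sum>\<omega>\<in>UNIV. \<Sum>e\<in>UNIV. pmf \<mu> \<omega> * ((if \<omega> \<in> R e then 1 else 0) * CC {} \<xi>0 e))"
    by (simp add: sum_distrib_left)
  also have "\<dots> = (\<Sum>e\<in>UNIV. \<Sum>\<omega>\<in>UNIV. pmf \<mu> \<omega> * ((if \<omega> \<in> R e then 1 else 0) * CC {} \<xi>0 e))"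
    by (rule sum.swap)
  also have "\<dots> = (\<Sum>e\<in>UNIV. (\<Sum>\<omega>\<in>UNIV. (if \<omega> \<in> R e then 1 else 0) * pmf \<mu> \<omega>) * CC {} \<xi>0 e)"
    unfolding sum_distrib_right by (rule sum.cong[OF refl], rule sum.cong[OF refl]) (simp add: algebra_simps)
  also have "\<dots> = (\<Sum>e\<in>UNIV. revealment \<mu> f \<phi> e * covariance_pmf \<mu> f (\<lambda>\<omega>. if \<omega> e then 1 else 0))"
    unfolding reveal_eq cov_eq[of _ \<xi>0] ..
  finally show ?thesis .
qed

end

theorem theorem1p1:
  fixes f :: "('e::finite \<Rightarrow> bool) \<Rightarrow> real"
    and \<mu> :: "('e \<Rightarrow> bool) pmf"
    and \<phi> :: "('e \<times> bool) list \<Rightarrow> 'e"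
  assumes "mono f"
    and "\<And>\<omega>. 0 \<le> f \<omega> \<and> f \<omega> \<le> 1"
    and "monotonic_measure \<mu>"
    and "decision_tree \<phi>"
  shows "measure_pmf.variance \<mu> f
         \<le> (\<Sum>e\<in>UNIV. revealment \<mu> f \<phi> e * covariance_pmf \<mu> f (\<lambda>\<omega>. if \<omega> e then 1 else 0))"
  proof -
  interpret osss \<mu> f \<phi> by unfold_locales (use assms in auto)
  show ?thesis by (rule osss_main)
qed


end
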